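(* Let $(Y,\preceq,\prec,\to)$ be a solid vector space, let $b\in Y$ with $b\succ0$, and let $\|\cdot\|$ be the Minkowski functional of $[-b,b]$. Then: (i) the monotone norm $\|\cdot\|$ generates the order topology on $Y$; (ii) for a sequence $(x_n)$ in $Y$, $x_n\to x$ implies $\|x_n-x\|\to0$.
   Context: Vector space with convergence: a real vector space $Y$ with a relation $\to$ between sequences in $Y$ and points of $Y$ (uniqueness of limits not assumed) such that (C1) $x_n\to x$, $y_n\to y$ imply $x_n+y_n\to x+y$; (C2) $x_n\to x$, $\lambda\in\mathbb R$ imply $\lambda x_n\to\lambda x$; (C3) $\lambda_n\to\lambda$ in $\mathbb R$ imply $\lambda_n x\to\lambda x$. $A\subseteq Y$ is open if $x_n\to x\in A$ implies $x_n\in A$ for all but finitely many $n$; closed if $x_n\to x$, $x_n\in A$ $\forall n$ imply $x\in A$; $A^\circ$ is the union of all open subsets of $A$. A cone is a nonempty closed $K$ with $\lambda K\subseteq K$ ($\lambda\ge0$), $K+K\subseteq K$, $K\cap(-K)=\{0\}$; solid if $K\ne\{0\}$, $K^\circ\ne\emptyset$. A vector ordering is a partial order $\preceq$ with (V1) $x\preceq y\Rightarrow x+z\preceq y+z$; (V2) $\lambda\ge0$, $x\preceq y\Rightarrow\lambda x\preceq\lambda y$; (V3) $x_n\to x$, $y_n\to y$, $x_n\preceq y_n$ $\forall n\Rightarrow x\preceq y$. Solid vector space: positive cone $K=\{x:x\succeq0\}$ solid, with $x\prec y$ iff $y-x\in K^\circ$. $[a,b]=\{x:a\preceq x\preceq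 b\}$; Minkowski functional of $A$: $\|x\|=\inf\{\lambda\ge0:x\in\lambda A\}$ (it is a norm for $A=[-b,b]$, $b\succ0$). Monotone norm: $\|x\|\le\|y\|$ whenever $0\preceq x\preceq y$. Order topology: the topology on $Y$ with basis the open intervals $(a,b)=\{x:a\prec x\prec b\}$, $a\prec b$. *)

theory Defs
  imports "HOL-Analysis.Analysis"
begin

definition conv_space :: "((nat \<Rightarrow> 'a::real_vector) \<Rightarrow> 'a \<Rightarrow> bool) \<Rightarrow> bool" where
  "conv_space conv \<longleftrightarrow>
     (\<forall>x y x0 y0. conv x x0 \<longrightarrow> conv y y0 \<longrightarrow> conv (\<lambda>n. x n + y n) (x0 + y0)) \<and>
     (\<forall>x x0 (c::real). conv x x0 \<longrightarrow> conv (\<lambda>n. c *\<^sub>R x n) (c *\<^sub>R x0)) \<and>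
     (\<forall>(l::nat \<Rightarrow> real) l0 x. l \<longlonglongrightarrow> l0 \<longrightarrow> conv (\<lambda>n. l n *\<^sub>R x) (l0 *\<^sub>R x))"

definition seq_open :: "((nat \<Rightarrow> 'a) \<Rightarrow> 'a \<Rightarrow> bool) \<Rightarrow> 'a set \<Rightarrow> bool" where
  "seq_open conv A \<longleftrightarrow> (\<forall>x x0. conv x x0 \<longrightarrow> x0 \<in> A \<longrightarrow> (\<forall>\<^sub>F n in sequentially. x n \<in> A))"

definition seq_closed :: "((nat \<Rightarrow> 'a) \<Rightarrow> 'a \<Rightarrow> bool) \<Rightarrow> 'a set \<Rightarrow> bool" where
  "seq_closed conv A \<longleftrightarrow> (\<forall>x x0. conv x x0 \<longrightarrow> (\<forall>n. x n \<in> A) \<longrightarrow> x0 \<in> A)"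

definition seq_interior :: "((nat \<Rightarrow> 'a) \<Rightarrow> 'a \<Rightarrow> bool) \<Rightarrow> 'a set \<Rightarrow> 'a set" where
  "seq_interior conv A = \<Union>{U. U \<subseteq> A \<and> seq_open conv U}"

definition conv_cone :: "((nat \<Rightarrow> 'a::real_vector) \<Rightarrow> 'a \<Rightarrow> bool) \<Rightarrow> 'a set \<Rightarrow> bool" where
  "conv_cone conv K \<longleftrightarrow> K \<noteq> {} \<and> seq_closed conv K \<and>
     (\<forall>c x. c \<ge> (0::real) \<longrightarrow> x \<in> K \<longrightarrow> c *\<^sub>R x \<in> K) \<and>
     (\<forall>x y. x \<in> K \<longrightarrow> y \<in> K \<longrightarrow> x + y \<in> K) \<and>
     K \<inter> uminus ` K = {0}"

definition solid_cone :: "((nat \<Rightarrow> 'a::real_vector) \<Rightarrow> 'a \<Rightarrow> bool) \<Rightarrow> 'a set \<Rightarrow> bool" where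
  "solid_cone conv K \<longleftrightarrow> conv_cone conv K \<and> K \<noteq> {0} \<and> seq_interior conv K \<noteq> {}"

definition vector_ordering :: "((nat \<Rightarrow> 'a::real_vector) \<Rightarrow> 'a \<Rightarrow> bool) \<Rightarrow> ('a \<Rightarrow> 'a \<Rightarrow> bool) \<Rightarrow> bool" where
  "vector_ordering conv le \<longleftrightarrow>
     (\<forall>x. le x x) \<and> (\<forall>x y. le x y \<longrightarrow> le y x \<longrightarrow> x = y) \<and>
     (\<forall>x y z. le x y \<longrightarrow> le y z \<longrightarrow> le x z) \<and>
     (\<forall>x y z. le x y \<longrightarrow> le (x + z) (y + z)) \<and>
     (\<forall>c x y. c \<ge> (0::real) \<longrightarrow> le x y \<longrightarrow> le (c *\<^sub>R x) (c *\<^sub>R y)) \<and>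
     (\<forall>x y x0 y0. conv x x0 \<longrightarrow> conv y y0 \<longrightarrow> (\<forall>n. le (x n) (y n)) \<longrightarrow> le x0 y0)"

definition pos_cone :: "('a::real_vector \<Rightarrow> 'a \<Rightarrow> bool) \<Rightarrow> 'a set" where
  "pos_cone le = {x. le 0 x}"

definition solid_vector_space :: "((nat \<Rightarrow> 'a::real_vector) \<Rightarrow> 'a \<Rightarrow> bool) \<Rightarrow> ('a \<Rightarrow> 'a \<Rightarrow> bool) \<Rightarrow> bool" where
  "solid_vector_space conv le \<longleftrightarrow> conv_space conv \<and> vector_ordering conv le \<and>
     solid_cone conv (pos_cone le)"

definition sless :: "((nat \<Rightarrow> 'a::real_vector) \<Rightarrow> 'a \<Rightarrow> bool) \<Rightarrow> ('a \<Rightarrow> 'a \<Rightarrow> bool) \<Rightarrow> 'a \<Rightarrow> 'a \<Rightarrow> bool" where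
  "sless conv le x y \<longleftrightarrow> y - x \<in> seq_interior conv (pos_cone le)"

definition ord_interval :: "('a \<Rightarrow> 'a \<Rightarrow> bool) \<Rightarrow> 'a \<Rightarrow> 'a \<Rightarrow> 'a set" where
  "ord_interval le a b = {x. le a x \<and> le x b}"

definition minkowski :: "'a::real_vector set \<Rightarrow> 'a \<Rightarrow> real" where
  "minkowski A x = Inf {c. c \<ge> 0 \<and> x \<in> (\<lambda>a. c *\<^sub>R a) ` A}"

definition order_topology :: "((nat \<Rightarrow> 'a::real_vector) \<Rightarrow> 'a \<Rightarrow> bool) \<Rightarrow> ('a \<Rightarrow> 'a \<Rightarrow> bool) \<Rightarrow> 'a topology" where
  "order_topology conv le = topology_generated_by
     {{x. sless conv le a x \<and> sless conv le x b} | a b. sless conv le a b}"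

definition norm_open :: "('a::real_vector \<Rightarrow> real) \<Rightarrow> 'a set \<Rightarrow> bool" where
  "norm_open p U \<longleftrightarrow> (\<forall>x\<in>U. \<exists>r>0. \<forall>y. p (y - x) < r \<longrightarrow> y \<in> U)"

end

theory Submission
  imports Defs
begin

theorem theorem7p7:
  fixes conv :: "(nat \<Rightarrow> 'a::real_vector) \<Rightarrow> 'a \<Rightarrow> bool"
    and le :: "'a \<Rightarrow> 'a \<Rightarrow> bool" and b :: 'a
  assumes "solid_vector_space conv le"
    and "sless conv le 0 b"
  shows "(\<forall>U. openin (order_topology conv le) U \<longleftrightarrow>
             norm_open (minkowski (ord_interval le (- b) b)) U)
       \<and> (\<forall>x x0. conv x x0 \<longrightarrow>
             (\<lambda>n. minkowski (ord_interval le (- b) b) (x n - x0)) \<longlonglongrightarrow> 0)"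
proof -
  have CS: "conv_space conv" and VO: "vector_ordering conv le"
    using assms(1) unfolding solid_vector_space_def by auto
  have C1: "\<And>x y x0 y0. conv x x0 \<Longrightarrow> conv y y0 \<Longrightarrow> conv (\<lambda>n. x n + y n) (x0 + y0)"
    using CS unfolding conv_space_def by blast
  have C2: "\<And>x x0 (c::real). conv x x0 \<Longrightarrow> conv (\<lambda>n. c *\<^sub>R x n) (c *\<^sub>R x0)"
    using CS unfolding conv_space_def by blast
  have C3: "\<And>(l::nat \<Rightarrow> real) l0 x. l \<longlonglongrightarrow> l0 \<Longrightarrow> conv (\<lambda>n. l n *\<^sub>R x) (l0 *\<^sub>R x)"
    using CS unfolding conv_space_def by blast
  have Cconst: "\<And>x. conv (\<lambda>n. x) x"
    using C3[of "\<lambda>n. 1" 1] by simp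
  have trans: "\<And>x y z. le x y \<Longrightarrow> le y z \<Longrightarrow> le x z"
    using VO unfolding vector_ordering_def by blast
  have V1: "\<And>x y z. le x y \<Longrightarrow> le (x + z) (y + z)"
    using VO unfolding vector_ordering_def by blast
  have V2: "\<And>c x y. c \<ge> (0::real) \<Longrightarrow> le x y \<Longrightarrow> le (c *\<^sub>R x) (c *\<^sub>R y)"
    using VO unfolding vector_ordering_def by blast
  have le_iff: "\<And>x y. le x y \<longleftrightarrow> le 0 (y - x)"
  proof
    fix x y assume "le x y" from V1[OF this, of "-x"] show "le 0 (y - x)" by simp
  next
    fix x y assume "le 0 (y - x)" from V1[OF this, of x] show "le x y" by simp
  qed
  have Kadd: "\<And>u v. le 0 u \<Longrightarrow> le 0 v \<Longrightarrow> le 0 (u + v)"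
  proof -
    fix u v assume "le 0 u" "le 0 v"
    from V1[OF \<open>le 0 u\<close>, of v] have "le v (u + v)" by simp
    with \<open>le 0 v\<close> trans show "le 0 (u + v)" by blast
  qed
  have Kscale: "\<And>c u. c \<ge> (0::real) \<Longrightarrow> le 0 u \<Longrightarrow> le 0 (c *\<^sub>R u)"
    using V2 by fastforce
  define I where "I = seq_interior conv (pos_cone le)"
  have IK: "\<And>x. x \<in> I \<Longrightarrow> le 0 x"
    unfolding I_def seq_interior_def pos_cone_def by auto
  have Iopen: "\<And>x x0. conv x x0 \<Longrightarrow> x0 \<in> I \<Longrightarrow> \<forall>\<^sub>F n in sequentially. x n \<in> I"
  proof -
    fix x x0 assume "conv x x0" "x0 \<in> I"
    then obtain U where U: "U \<subseteq> pos_cone le" "seq_open conv U" "x0 \<in> U"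
      unfolding I_def seq_interior_def by auto
    then have "\<forall>\<^sub>F n in sequentially. x n \<in> U" using \<open>conv x x0\<close> unfolding seq_open_def by blast
    moreover have "U \<subseteq> I" using U unfolding I_def seq_interior_def by auto
    ultimately show "\<forall>\<^sub>F n in sequentially. x n \<in> I" by (auto elim: eventually_mono)
  qed
  have Iadd: "\<And>x k. x \<in> I \<Longrightarrow> le 0 k \<Longrightarrow> x + k \<in> I"
  proof -
    fix x k assume "x \<in> I" "le 0 k"
    then obtain U where U: "U \<subseteq> pos_cone le" "seq_open conv U" "x \<in> U"
      unfolding I_def seq_interior_def by auto
    define V where "V = (\<lambda>u. u + k) ` U"
    have "V \<subseteq> pos_cone le" using U(1) Kadd \<open>le 0 k\<close> unfolding V_def pos_cone_def by auto
    moreover have "seq_open conv V"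
      unfolding seq_open_def
    proof (intro allI impI)
      fix y y0 assume "conv y y0" "y0 \<in> V"
      have "conv (\<lambda>n. y n + - k) (y0 + - k)" using C1[OF \<open>conv y y0\<close> Cconst] .
      moreover have "y0 + - k \<in> U" using \<open>y0 \<in> V\<close> unfolding V_def by auto
      ultimately have "\<forall>\<^sub>F n in sequentially. y n + - k \<in> U" using U(2) unfolding seq_open_def by blast
      then show "\<forall>\<^sub>F n in sequentially. y n \<in> V"
        by (rule eventually_mono) (force simp: V_def image_iff)
    qed
    moreover have "x + k \<in> V" using U(3) unfolding V_def by auto
    ultimately show "x + k \<in> I" unfolding I_def seq_interior_def by auto
  qed
  have Iscale: "\<And>x c. x \<in> I \<Longrightarrow> c > (0::real) \<Longrightarrow> c *\<^sub>R x \<in> I"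
  proof -
    fix x and c :: real assume "x \<in> I" "c > 0"
    then obtain U where U: "U \<subseteq> pos_cone le" "seq_open conv U" "x \<in> U"
      unfolding I_def seq_interior_def by auto
    define V where "V = (\<lambda>u. c *\<^sub>R u) ` U"
    have "V \<subseteq> pos_cone le" using U(1) Kscale \<open>c > 0\<close> unfolding V_def pos_cone_def by auto
    moreover have "seq_open conv V"
      unfolding seq_open_def
    proof (intro allI impI)
      fix y y0 assume "conv y y0" "y0 \<in> V"
      have "conv (\<lambda>n. inverse c *\<^sub>R y n) (inverse c *\<^sub>R y0)" using C2[OF \<open>conv y y0\<close>] .
      moreover have "inverse c *\<^sub>R y0 \<in> U" using \<open>y0 \<in> V\<close> \<open>c > 0\<close> unfolding V_def by auto
      ultimately have "\<forall>\<^sub>F n in sequentially. inverse c *\<^sub>R y n \<in> U" using U(2) unfolding seq_open_def by blast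
      then show "\<forall>\<^sub>F n in sequentially. y n \<in> V"
      proof (rule eventually_mono)
        fix n assume "inverse c *\<^sub>R y n \<in> U"
        moreover have "y n = c *\<^sub>R (inverse c *\<^sub>R y n)" using \<open>c > 0\<close> by simp
        ultimately show "y n \<in> V" unfolding V_def by blast
      qed
    qed
    moreover have "c *\<^sub>R x \<in> V" using U(3) unfolding V_def by auto
    ultimately show "c *\<^sub>R x \<in> I" unfolding I_def seq_interior_def by auto
  qed
  have bI: "b \<in> I" using assms(2) unfolding sless_def I_def by simp
  have Iev: "\<And>x v. x \<in> I \<Longrightarrow> \<forall>\<^sub>F n in sequentially. x + (1 / Suc n) *\<^sub>R v \<in> I"
  proof -
    fix x v assume "x \<in> I"
    have "(\<lambda>n. 1 / real (Suc n)) \<longlonglongrightarrow> 0" using LIMSEQ_Suc[OF lim_const_over_n[of 1]]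
      by simp
    from C3[OF this, of v] have "conv (\<lambda>n. (1 / real (Suc n)) *\<^sub>R v) 0" by simp
    from C1[OF Cconst this, of x] have "conv (\<lambda>n. x + (1 / real (Suc n)) *\<^sub>R v) x" by simp
    from Iopen[OF this \<open>x \<in> I\<close>] show "\<forall>\<^sub>F n in sequentially. x + (1 / Suc n) *\<^sub>R v \<in> I" by simp
  qed
  have Idelta: "\<And>x. x \<in> I \<Longrightarrow> \<exists>d>0. x - d *\<^sub>R b \<in> I"
  proof -
    fix x assume "x \<in> I"
    from eventually_happens[OF Iev[OF this, of "-b"]] obtain n where "x + (1 / Suc n) *\<^sub>R (-b) \<in> I"
      by auto
    then show "\<exists>d>0. x - d *\<^sub>R b \<in> I" by (intro exI[of _ "1 / Suc n"]) auto
  qed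
  define p where "p = minkowski (ord_interval le (- b) b)"
  define S where "S z = {c. c \<ge> 0 \<and> z \<in> (\<lambda>a. c *\<^sub>R a) ` ord_interval le (- b) b}" for z
  have p_S: "\<And>z. p z = Inf (S z)" unfolding p_def S_def minkowski_def by simp
  have bddS: "\<And>z. bdd_below (S z)" unfolding S_def by (auto intro: bdd_belowI[of _ 0])
  have memS: "\<And>c z. c > 0 \<Longrightarrow> le (- (c *\<^sub>R b)) z \<Longrightarrow> le z (c *\<^sub>R b) \<Longrightarrow> c \<in> S z"
  proof -
    fix c :: real and z assume c: "c > 0" "le (- (c *\<^sub>R b)) z" "le z (c *\<^sub>R b)"
    from V2[OF _ c(2), of "inverse c"] c(1) have "le (- b) (inverse c *\<^sub>R z)" by simp
    moreover from V2[OF _ c(3), of "inverse c"] c(1) have "le (inverse c *\<^sub>R z) b" by simp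
    moreover have "z = c *\<^sub>R (inverse c *\<^sub>R z)" using c(1) by simp
    ultimately have "z \<in> (\<lambda>a. c *\<^sub>R a) ` ord_interval le (- b) b"
      unfolding ord_interval_def by (intro image_eqI[of _ _ "inverse c *\<^sub>R z"]) auto
    then show "c \<in> S z" unfolding S_def using c(1) by auto
  qed
  have Sel: "\<And>c z. c \<in> S z \<Longrightarrow> c \<ge> 0 \<and> le (- (c *\<^sub>R b)) z \<and> le z (c *\<^sub>R b)"
  proof -
    fix c z assume "c \<in> S z"
    then obtain a where a: "c \<ge> 0" "le (-b) a" "le a b" "z = c *\<^sub>R a"
      unfolding S_def ord_interval_def by auto
    from V2[OF a(1) a(2)] V2[OF a(1) a(3)] a(1,4) show "c \<ge> 0 \<and> le (- (c *\<^sub>R b)) z \<and> le z (c *\<^sub>R b)"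
      by simp
  qed
  have p_le: "\<And>c z. c > 0 \<Longrightarrow> le (- (c *\<^sub>R b)) z \<Longrightarrow> le z (c *\<^sub>R b) \<Longrightarrow> p z \<le> c"
    using memS bddS p_S by (metis cInf_lower)
  have Sne: "\<And>z. S z \<noteq> {}"
  proof -
      fix z
      from eventually_happens[OF eventually_conj[OF Iev[OF bI, of z] Iev[OF bI, of "-z"]]]
      obtain n where n: "b + (1 / Suc n) *\<^sub>R z \<in> I" "b + (1 / Suc n) *\<^sub>R (-z) \<in> I" by auto
      have e1: "real (Suc n) *\<^sub>R (b + (1 / Suc n) *\<^sub>R z) = z - (- (real (Suc n) *\<^sub>R b))"
        by (simp add: algebra_simps)
      have e2: "real (Suc n) *\<^sub>R (b + (1 / Suc n) *\<^sub>R (-z)) = real (Suc n) *\<^sub>R b - z"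
        by (simp add: algebra_simps)
      have "le (- (real (Suc n) *\<^sub>R b)) z"
        using Kscale[OF _ IK[OF n(1)], of "real (Suc n)"] unfolding e1 le_iff[of "- (real (Suc n) *\<^sub>R b)" z] by simp
      moreover have "le z (real (Suc n) *\<^sub>R b)"
        using Kscale[OF _ IK[OF n(2)], of "real (Suc n)"] unfolding e2 le_iff[of z] by simp
      ultimately show "S z \<noteq> {}" using memS[of "real (Suc n)" z] by auto
    qed
  have p_less: "\<And>z d. p z < d \<Longrightarrow> \<exists>c. c \<ge> 0 \<and> c < d \<and> le (- (c *\<^sub>R b)) z \<and> le z (c *\<^sub>R b)"
  proof -
    fix z d assume "p z < d"
    have "S z \<noteq> {}" by (rule Sne)
    then obtain c where "c \<in> S z" "c < d" using \<open>p z < d\<close> p_S bddS by (metis cInf_lessD)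
    then show "\<exists>c. c \<ge> 0 \<and> c < d \<and> le (- (c *\<^sub>R b)) z \<and> le z (c *\<^sub>R b)" using Sel by blast
  qed
  have p_nonneg: "\<And>z. p z \<ge> 0"
    unfolding p_S using Sne Sel by (intro cInf_greatest) auto
  have part2: "\<forall>x x0. conv x x0 \<longrightarrow> (\<lambda>n. p (x n - x0)) \<longlonglongrightarrow> 0"
  proof (intro allI impI)
    fix x x0 assume "conv x x0"
    from C1[OF this Cconst[of "-x0"]] have d: "conv (\<lambda>n. x n - x0) 0" by simp
    from C2[OF d, of "-1"] have dm: "conv (\<lambda>n. - (x n - x0)) 0" by simp
    show "(\<lambda>n. p (x n - x0)) \<longlonglongrightarrow> 0"
    proof (rule order_tendstoI)
      fix a :: real assume "a < 0" then show "\<forall>\<^sub>F n in sequentially. a < p (x n - x0)"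
        using p_nonneg by (auto intro: always_eventually less_le_trans)
    next
      fix a :: real assume "0 < a"
      define e where "e = a / 2"
      have e: "e > 0" "e < a" using \<open>0 < a\<close> unfolding e_def by auto
      have eb: "e *\<^sub>R b \<in> I" using Iscale[OF bI e(1)] .
      from C1[OF Cconst d, of "e *\<^sub>R b"] have "conv (\<lambda>n. e *\<^sub>R b + (x n - x0)) (e *\<^sub>R b)" by simp
      from Iopen[OF this eb] have ev1: "\<forall>\<^sub>F n in sequentially. e *\<^sub>R b + (x n - x0) \<in> I" .
      from C1[OF Cconst dm, of "e *\<^sub>R b"] have "conv (\<lambda>n. e *\<^sub>R b + - (x n - x0)) (e *\<^sub>R b)" by simp
      from Iopen[OF this eb] have ev2: "\<forall>\<^sub>F n in sequentially. e *\<^sub>R b + - (x n - x0) \<in> I" .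
      show "\<forall>\<^sub>F n in sequentially. p (x n - x0) < a"
        using eventually_conj[OF ev1 ev2]
      proof (rule eventually_mono)
        fix n assume n: "e *\<^sub>R b + (x n - x0) \<in> I \<and> e *\<^sub>R b + - (x n - x0) \<in> I"
        define z where "z = x n - x0"
        have q1: "z - (- (e *\<^sub>R b)) = e *\<^sub>R b + (x n - x0)" by (simp add: z_def)
        have q2: "e *\<^sub>R b - z = e *\<^sub>R b + - (x n - x0)" by (simp add: z_def)
        have "le (- (e *\<^sub>R b)) z" using IK n le_iff[of "- (e *\<^sub>R b)" z] unfolding q1 by blast
        moreover have "le z (e *\<^sub>R b)" using IK n le_iff[of z "e *\<^sub>R b"] unfolding q2 by blast
        ultimately have "p z \<le> e" using p_le e(1) by blast
        then show "p (x n - x0) < a" using e(2) z_def by simp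
      qed
    qed
  qed
  have sl: "\<And>a x. sless conv le a x \<longleftrightarrow> x - a \<in> I" unfolding sless_def I_def by simp
  define B where "B = {{x. sless conv le a x \<and> sless conv le x c} | a c. sless conv le a c}"
  have part1a: "norm_open p U" if "generate_topology_on B U" for U
    using that
  proof (induction rule: generate_topology_on.induct)
    case Empty
    then show ?case unfolding norm_open_def by simp
  next
    case (Int U1 U2)
    show ?case unfolding norm_open_def
    proof
      fix x assume "x \<in> U1 \<inter> U2"
      then obtain r1 r2 where "r1 > 0" "\<forall>y. p (y - x) < r1 \<longrightarrow> y \<in> U1" "r2 > 0" "\<forall>y. p (y - x) < r2 \<longrightarrow> y \<in> U2"
        using Int.IH unfolding norm_open_def by blast
      then show "\<exists>r>0. \<forall>y. p (y - x) < r \<longrightarrow> y \<in> U1 \<inter> U2"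
        by (intro exI[of _ "min r1 r2"]) auto
    qed
  next
    case (UN K)
    show ?case unfolding norm_open_def
    proof
      fix x assume "x \<in> \<Union>K"
      then obtain k where "k \<in> K" "x \<in> k" by auto
      then obtain r where "r > 0" "\<forall>y. p (y - x) < r \<longrightarrow> y \<in> k"
        using UN.IH unfolding norm_open_def by blast
      then show "\<exists>r>0. \<forall>y. p (y - x) < r \<longrightarrow> y \<in> \<Union>K" using \<open>k \<in> K\<close> by blast
    qed
  next
    case (Basis s)
    then obtain a c where s: "s = {x. x - a \<in> I \<and> c - x \<in> I}" unfolding B_def sl by blast
    show ?case unfolding norm_open_def
    proof
      fix x assume "x \<in> s"
      then have "x - a \<in> I" "c - x \<in> I" using s by auto
      then obtain d1 d2 where d: "d1 > 0" "x - a - d1 *\<^sub>R b \<in> I" "d2 > 0" "c - x - d2 *\<^sub>R b \<in> I"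
        using Idelta by meson
      have bK: "le 0 b" using IK bI by blast
      show "\<exists>r>0. \<forall>y. p (y - x) < r \<longrightarrow> y \<in> s"
      proof (intro exI[of _ "min d1 d2"] conjI allI impI)
        show "min d1 d2 > 0" using d by simp
        fix y assume "p (y - x) < min d1 d2"
        then obtain c' where c': "c' \<ge> 0" "c' < min d1 d2" "le (- (c' *\<^sub>R b)) (y - x)" "le (y - x) (c' *\<^sub>R b)"
          using p_less by blast
        have k1: "le 0 ((y - x) - (- (c' *\<^sub>R b)))" using c'(3) le_iff by blast
        have k2: "le 0 (c' *\<^sub>R b - (y - x))" using c'(4) le_iff by blast
        have k3: "le 0 ((d1 - c') *\<^sub>R b)" using Kscale[OF _ bK, of "d1 - c'"] c'(2) by simp
        have k4: "le 0 ((d2 - c') *\<^sub>R b)" using Kscale[OF _ bK, of "d2 - c'"] c'(2) by simp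
        have m1: "(x - a - d1 *\<^sub>R b) + ((d1 - c') *\<^sub>R b + ((y - x) - (- (c' *\<^sub>R b)))) \<in> I"
          using Iadd[OF d(2) Kadd[OF k3 k1]] .
        have q1: "(x - a - d1 *\<^sub>R b) + ((d1 - c') *\<^sub>R b + ((y - x) - (- (c' *\<^sub>R b)))) = y - a"
          by (simp add: algebra_simps)
        have m2: "(c - x - d2 *\<^sub>R b) + ((d2 - c') *\<^sub>R b + (c' *\<^sub>R b - (y - x))) \<in> I"
          using Iadd[OF d(4) Kadd[OF k4 k2]] .
        have q2: "(c - x - d2 *\<^sub>R b) + ((d2 - c') *\<^sub>R b + (c' *\<^sub>R b - (y - x))) = c - y"
          by (simp add: algebra_simps)
        have "y - a \<in> I" using m1 unfolding q1 .
        moreover have "c - y \<in> I" using m2 unfolding q2 .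
        ultimately show "y \<in> s" using s by simp
      qed
    qed
  qed
  have part1b: "generate_topology_on B U" if nU: "norm_open p U" for U
  proof -
    define F where "F = {s \<in> B. s \<subseteq> U}"
    have "U = \<Union>F"
    proof
      show "\<Union>F \<subseteq> U" unfolding F_def by auto
      show "U \<subseteq> \<Union>F"
      proof
        fix x assume "x \<in> U"
        then obtain r where r: "r > 0" "\<forall>y. p (y - x) < r \<longrightarrow> y \<in> U"
          using nU unfolding norm_open_def by blast
        define e where "e = r / 2"
        have e: "e > 0" "e < r" using r(1) unfolding e_def by auto
        have eb: "e *\<^sub>R b \<in> I" using Iscale[OF bI e(1)] .
        define s where "s = {y. sless conv le (x - e *\<^sub>R b) y \<and> sless conv le y (x + e *\<^sub>R b)}"
        have "(x + e *\<^sub>R b) - (x - e *\<^sub>R b) = (2 * e) *\<^sub>R b" by (simp add: algebra_simps scaleR_2 flip: scaleR_scaleR)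
        then have "sless conv le (x - e *\<^sub>R b) (x + e *\<^sub>R b)"
          unfolding sl using Iscale[OF bI, of "2 * e"] e(1) by simp
        then have "s \<in> B" unfolding B_def s_def by blast
        moreover have "s \<subseteq> U"
        proof
          fix y assume "y \<in> s"
          then have h: "y - (x - e *\<^sub>R b) \<in> I" "(x + e *\<^sub>R b) - y \<in> I" unfolding s_def sl by auto
          have q1: "(y - x) - (- (e *\<^sub>R b)) = y - (x - e *\<^sub>R b)" by (simp add: algebra_simps)
          have q2: "e *\<^sub>R b - (y - x) = (x + e *\<^sub>R b) - y" by (simp add: algebra_simps)
          have "le (- (e *\<^sub>R b)) (y - x)" using IK[OF h(1)] le_iff[of "- (e *\<^sub>R b)" "y - x"] unfolding q1 by blast
          moreover have "le (y - x) (e *\<^sub>R b)" using IK[OF h(2)] le_iff[of "y - x" "e *\<^sub>R b"] unfolding q2 by blast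
          ultimately have "p (y - x) \<le> e" using p_le e(1) by blast
          then show "y \<in> U" using r(2) e(2) by auto
        qed
        moreover have "x \<in> s" unfolding s_def sl using eb by simp
        ultimately show "x \<in> \<Union>F" unfolding F_def by blast
      qed
    qed
    moreover have "generate_topology_on B (\<Union>F)"
      by (rule generate_topology_on.UN) (auto simp: F_def intro: generate_topology_on.Basis)
    ultimately show ?thesis by simp
  qed
  have "openin (order_topology conv le) U \<longleftrightarrow> norm_open p U" for U
    unfolding order_topology_def openin_topology_generated_by_iff B_def[symmetric]
    using part1a part1b by blast
  then show ?thesis using part2 unfolding p_def by blast
qed

end
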